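(* Let $f:\mathbb{R}^n\to\mathbb{R}$ be continuously differentiable and bounded below, with $\nabla f$ Lipschitz continuous on $\mathbb{R}^n$, and let $s$ be an integer with $0<s<n$. Then any optimal solution $\mathbf{x}^*$ of the problem (P): minimize $f(\mathbf{x})$ subject to $\|\mathbf{x}\|_0\le s$, is an $L_2(f)$-stationary point of (P), i.e. $\nabla_i f(\mathbf{x}^* )=0$ for $i\in I_1(\mathbf{x}^* )$ and $|\nabla_i f(\mathbf{x}^* )|\le L_2(f)M_s(\mathbf{x}^* )$ for $i\in I_0(\mathbf{x}^* )$.
   Context: $\|\mathbf{x}\|_0$ is the number of nonzero components; $I_1(\mathbf{x})=\{i:x_i\neq0\}$, $I_0(\mathbf{x})=\{i:x_i=0\}$; $M_s(\mathbf{x})$ is the $s$-th largest absolute value among the components of $\mathbf{x}$. For $i\neq j$, $\nabla_{i,j}f(\mathbf{x})\in\mathbb{R}^2$ is the vector of the $i$-th and $j$-th partial derivatives, and $L_{i,j}(f)$ is a constant with $\|\nabla_{i,j}f(\mathbf{x})-\nabla_{i,j}f(\mathbf{x}+\mathbf{d})\|\le L_{i,j}(f)\|\mathbf{d}\|$ for all $\mathbf{x}$ and all $\mathbf{d}$ with at most two nonzero components; $L_2(f)=\max_{i\neq j}L_{i,j}(f)$. *)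

theory Defs
  imports "HOL-Analysis.Analysis" "HOL-Library.Multiset"
begin

text \<open>Vectors in R^n are modelled as real^'n for a finite index type 'n (n = CARD('n)).\<close>

definition l0norm :: "real^'n \<Rightarrow> nat" where
  "l0norm x = card {i. x $ i \<noteq> 0}"

definition I1 :: "real^'n \<Rightarrow> 'n set" where
  "I1 x = {i. x $ i \<noteq> 0}"

definition I0 :: "real^'n \<Rightarrow> 'n set" where
  "I0 x = {i. x $ i = 0}"

text \<open>M s x: the s-th largest absolute value among the components of x (s \<ge> 1),
  counted with multiplicity.\<close>
definition Ms :: "nat \<Rightarrow> real^'n \<Rightarrow> real" where
  "Ms s x = rev (sorted_list_of_multiset (image_mset (\<lambda>i. \<bar>x $ i\<bar>) (mset_set (UNIV :: 'n set)))) ! (s - 1)"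

definition pair_grad_dist :: "(real^'n \<Rightarrow> real^'n) \<Rightarrow> 'n \<Rightarrow> 'n \<Rightarrow> real^'n \<Rightarrow> real^'n \<Rightarrow> real" where
  "pair_grad_dist G i j x y = sqrt ((G x $ i - G y $ i)^2 + (G x $ j - G y $ j)^2)"

definition pair_lip_consts :: "(real^'n \<Rightarrow> real^'n) \<Rightarrow> ('n \<Rightarrow> 'n \<Rightarrow> real) \<Rightarrow> bool" where
  "pair_lip_consts G L \<longleftrightarrow> (\<forall>i j. i \<noteq> j \<longrightarrow> (\<forall>x d. l0norm d \<le> 2 \<longrightarrow>
      pair_grad_dist G i j x (x + d) \<le> L i j * norm d))"

definition L2 :: "('n \<Rightarrow> 'n \<Rightarrow> real) \<Rightarrow> real" where
  "L2 L = Max {L i j | i j. i \<noteq> j}"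

end

theory Submission
  imports Defs
begin

lemma Ms_prop:
  fixes x :: "real^'n"
  assumes "0 < s" "s < CARD('n)"
  shows "0 \<le> Ms s x \<and> (l0norm x = s \<longrightarrow> (\<exists>j. x$j \<noteq> 0 \<and> \<bar>x$j\<bar> = Ms s x))"
proof -
  define M where "M = image_mset (\<lambda>i. \<bar>x$i\<bar>) (mset_set (UNIV::'n set))"
  define l where "l = rev (sorted_list_of_multiset M)"
  have Ms: "Ms s x = l ! (s-1)" by (simp add: Ms_def l_def M_def)
  have ml: "mset l = M" by (simp add: l_def)
  have len: "length l = CARD('n)"
    by (metis M_def ml size_image_mset size_mset size_mset_set)
  have srt: "sorted_wrt (\<ge>) l"
    using sorted_sorted_list_of_multiset[of M] by (simp add: l_def sorted_wrt_rev)
  have inset: "l ! (s-1) \<in> set l" using len assms by simp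
  have "set l = (\<lambda>i. \<bar>x$i\<bar>) ` UNIV"
    by (metis M_def finite_class.finite_UNIV finite_set_mset_mset_set ml set_image_mset set_mset_mset)
  with inset obtain j where j: "l!(s-1) = \<bar>x$j\<bar>" by auto
  have "x $ j \<noteq> 0" if l0: "l0norm x = s"
  proof
    assume xj: "x $ j = 0"
    have le0: "l ! m \<le> 0" if "s - 1 \<le> m" "m < length l" for m
    proof (cases "m = s - 1")
      case True then show ?thesis using j xj by simp
    next
      case False
      then have "l ! m \<le> l ! (s-1)" using sorted_wrt_nth_less[OF srt, of "s-1" m] that by auto
      then show ?thesis using j xj by simp
    qed
    have "{m. m < length l \<and> l ! m > 0} \<subseteq> {..<s-1}"
      using le0 by (auto simp: not_less) (meson le0 linorder_not_le)
    then have c1: "length (filter (\<lambda>v. v > 0) l) \<le> s - 1"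
      unfolding length_filter_conv_card by (metis card_lessThan card_mono finite_lessThan)
    have "length (filter (\<lambda>v. v > 0) l) = size (filter_mset (\<lambda>v. v > 0) M)"
      by (metis ml mset_filter size_mset)
    also have "\<dots> = card {i. x $ i \<noteq> 0}"
      by (simp add: M_def filter_mset_image_mset)
    also have "\<dots> = s" using l0 by (simp add: l0norm_def)
    finally show False using c1 assms by simp
  qed
  then show ?thesis using j Ms by auto
qed

lemma line_deriv:
  fixes f :: "real^'n \<Rightarrow> real"
  assumes grad: "\<And>x. (f has_derivative (\<lambda>h. G x \<bullet> h)) (at x)"
  shows "((\<lambda>\<tau>. f (x + \<tau> *\<^sub>R d)) has_real_derivative (G (x + \<tau> *\<^sub>R d) \<bullet> d)) (at \<tau>)"
proof -
  have 1: "((\<lambda>\<tau>. x + \<tau> *\<^sub>R d) has_derivative (\<lambda>h. h *\<^sub>R d)) (at \<tau>)"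
    by (auto intro!: derivative_eq_intros)
  have "((\<lambda>\<tau>. f (x + \<tau> *\<^sub>R d)) has_derivative (\<lambda>h. G (x + \<tau> *\<^sub>R d) \<bullet> (h *\<^sub>R d))) (at \<tau>)"
    using has_derivative_compose[OF 1 grad] by simp
  moreover have "(\<lambda>h. G (x + \<tau> *\<^sub>R d) \<bullet> (h *\<^sub>R d)) = (*) (G (x + \<tau> *\<^sub>R d) \<bullet> d)"
    by (rule ext) (simp add: inner_scaleR_right)
  ultimately show ?thesis unfolding has_field_derivative_def by simp
qed

lemma stat_coord:
  fixes f :: "real^'n \<Rightarrow> real"
  assumes grad: "\<And>x. (f has_derivative (\<lambda>h. G x \<bullet> h)) (at x)"
    and mn: "\<And>t. f x \<le> f (x + t *\<^sub>R axis i 1)"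
  shows "G x $ i = 0"
proof -
  have D: "((\<lambda>\<tau>. f (x + \<tau> *\<^sub>R axis i 1)) has_real_derivative (G x \<bullet> axis i 1)) (at 0)"
    using line_deriv[OF grad, of x "axis i 1" 0] by simp
  have "G x \<bullet> axis i 1 = 0"
  proof (rule DERIV_local_min[OF D zero_less_one])
    show "\<forall>y. \<bar>0 - y\<bar> < 1 \<longrightarrow> f (x + 0 *\<^sub>R axis i 1) \<le> f (x + y *\<^sub>R axis i 1)"
      using mn by simp
  qed
  then show ?thesis by (simp add: inner_axis)
qed

lemma l0_two:
  fixes a b c :: real
  shows "l0norm (c *\<^sub>R (axis i a + axis j b) :: real^'n) \<le> 2"
proof -
  have "{k. (c *\<^sub>R (axis i a + axis j b) :: real^'n) $ k \<noteq> 0} \<subseteq> {i, j}"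
    by (auto simp: axis_def)
  then have "card {k. (c *\<^sub>R (axis i a + axis j b) :: real^'n) $ k \<noteq> 0} \<le> card {i, j}"
    by (rule card_mono[rotated]) simp
  also have "\<dots> \<le> 2" by (simp add: card_insert_le_m1)
  finally show ?thesis by (simp add: l0norm_def)
qed

lemma norm_two:
  assumes "i \<noteq> j"
  shows "(norm (axis i a + axis j b :: real^'n))^2 = a^2 + b^2"
proof -
  have "(norm (axis i a + axis j b :: real^'n))^2 = (axis i a + axis j b) \<bullet> (axis i a + axis j b)"
    by (rule power2_norm_eq_inner)
  also have "\<dots> = a^2 + b^2"
    using assms by (simp add: inner_add_left inner_add_right inner_axis_axis power2_eq_square)
  finally show ?thesis .
qed

lemma cs2: "p * a + q * b \<le> sqrt (p^2 + q^2) * sqrt (a^2 + (b::real)^2)"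
proof -
  have "(p*a+q*b)^2 \<le> (p^2+q^2)*(a^2+b^2)"
    using sum_squares_ge_zero[of "p*b - q*a" 0] by (simp add: power2_eq_square algebra_simps)
  then have "\<bar>p*a+q*b\<bar> \<le> sqrt ((p^2+q^2)*(a^2+b^2))"
    using real_le_rsqrt by (metis real_sqrt_abs real_sqrt_le_mono)
  then show ?thesis by (simp add: real_sqrt_mult)
qed

lemma descent:
  fixes f :: "real^'n \<Rightarrow> real"
  assumes grad: "\<And>x. (f has_derivative (\<lambda>h. G x \<bullet> h)) (at x)"
    and Lc: "pair_lip_consts G L" and ij: "i \<noteq> j"
  shows "f (x + (axis i a + axis j b)) \<le> f x + G x \<bullet> (axis i a + axis j b) + L i j / 2 * (a^2 + b^2)"
proof -
  define d where "d = (axis i a + axis j b :: real^'n)"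
  define c where "c = a^2 + b^2"
  define h where "h \<tau> = f (x + \<tau> *\<^sub>R d) - \<tau> * (G x \<bullet> d) - L i j / 2 * \<tau>^2 * c" for \<tau>
  have nd: "norm d = sqrt c"
    using norm_two[OF ij, of a b] unfolding d_def c_def by (metis norm_ge_zero real_sqrt_unique)
  have "h 1 \<le> h 0"
  proof (rule DERIV_nonpos_imp_nonincreasing[of 0 1 h])
    fix \<tau> :: real assume \<tau>: "0 \<le> \<tau>" "\<tau> \<le> 1"
    let ?y = "x + \<tau> *\<^sub>R d"
    have Dh: "(h has_real_derivative (G ?y \<bullet> d - G x \<bullet> d - L i j * \<tau> * c)) (at \<tau>)"
      unfolding h_def
      by (rule derivative_eq_intros line_deriv[OF grad] | simp)+
    have "G ?y \<bullet> d - G x \<bullet> d = (G ?y $ i - G x $ i) * a + (G ?y $ j - G x $ j) * b"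
      by (simp add: d_def inner_add_right inner_axis algebra_simps)
    also have "\<dots> \<le> pair_grad_dist G i j x ?y * sqrt c"
      unfolding pair_grad_dist_def c_def
      using cs2[of "G ?y $ i - G x $ i" a "G ?y $ j - G x $ j" b] by (simp add: power2_commute)
    also have "\<dots> \<le> L i j * \<tau> * c"
    proof -
      have c0: "0 \<le> c" by (simp add: c_def)
      have "pair_grad_dist G i j x ?y \<le> L i j * norm (\<tau> *\<^sub>R d)"
        using Lc ij l0_two[of \<tau> i a j b] unfolding pair_lip_consts_def d_def by blast
      then have "pair_grad_dist G i j x ?y * sqrt c \<le> L i j * norm (\<tau> *\<^sub>R d) * sqrt c"
        by (rule mult_right_mono) (simp add: c0)
      also have "L i j * norm (\<tau> *\<^sub>R d) * sqrt c = L i j * \<tau> * c"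
        using \<tau> c0 by (simp add: nd)
      finally show ?thesis .
    qed
    finally show "\<exists>y. (h has_real_derivative y) (at \<tau>) \<and> y \<le> 0"
      using Dh by (intro exI[of _ "G ?y \<bullet> d - G x \<bullet> d - L i j * \<tau> * c"]) simp
  qed simp
  then show ?thesis by (simp add: h_def d_def c_def)
qed

lemma a1: "0 < (L::real) \<Longrightarrow> (-g/L) * g + L / 2 * ((-g/L)^2 + c^2) = (L^2*c^2 - g^2) / (2*L)"
  by (simp add: power2_eq_square field_simps)
lemma a2: "(0::real) \<le> (-g) * g \<Longrightarrow> g = 0"
  by (metis mult_minus_left neg_0_le_iff_le zero_le_square linorder_not_less  mult_eq_0_iff order_antisym_conv)
lemma a3: "(g::real)^2 \<le> (L * \<bar>c\<bar>)^2 \<Longrightarrow> 0 \<le> L \<Longrightarrow> \<bar>g\<bar> \<le> L * \<bar>c\<bar>"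
  by (metis abs_ge_zero abs_le_square_iff mult_nonneg_nonneg abs_of_nonneg)
lemma quad_bound:
  fixes g L c :: real
  assumes h: "\<And>t. 0 \<le> t * g + L / 2 * (t^2 + c^2)" and L0: "0 \<le> L"
  shows "\<bar>g\<bar> \<le> L * \<bar>c\<bar>"
proof (cases "L = 0")
  case True
  have "0 \<le> (-g) * g + L / 2 * ((-g)^2 + c^2)" by (rule h)
  then have "0 \<le> (-g) * g" using True by simp
  then have "g = 0" by (rule a2)
  then show ?thesis using True by simp
next
  case False
  then have Lp: "0 < L" using L0 by simp
  have "0 \<le> (-g/L) * g + L / 2 * ((-g/L)^2 + c^2)" by (rule h)
  then have "0 \<le> (L^2*c^2 - g^2) / (2*L)" by (simp only: a1[OF Lp])
  then have "0 \<le> L^2*c^2 - g^2" using Lp by (simp add: zero_le_divide_iff)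
  then have "g^2 \<le> (L * \<bar>c\<bar>)^2" by (simp add: power_mult_distrib)
  then show ?thesis using L0 by (rule a3)
qed

lemma supp_sub_card:
  fixes x y :: "real^'n"
  assumes "{k. y $ k \<noteq> 0} \<subseteq> A"
  shows "l0norm y \<le> card A"
  unfolding l0norm_def using assms by (intro card_mono) auto

theorem corollary2p2:
  fixes f :: "real^'n \<Rightarrow> real" and G :: "real^'n \<Rightarrow> real^'n"
    and s :: nat and L :: "'n \<Rightarrow> 'n \<Rightarrow> real" and xstar :: "real^'n"
  assumes grad: "\<And>x. (f has_derivative (\<lambda>h. G x \<bullet> h)) (at x)"
    and cont: "continuous_on UNIV G"
    and bdd: "\<exists>c. \<forall>x. c \<le> f x"
    and lip: "\<exists>K. \<forall>x y. norm (G x - G y) \<le> K * norm (x - y)"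
    and s_pos: "0 < s" and s_lt: "s < CARD('n)"
    and Lc: "pair_lip_consts G L"
    and feas: "l0norm xstar \<le> s"
    and opt: "\<And>x. l0norm x \<le> s \<Longrightarrow> f xstar \<le> f x"
  shows "(\<forall>i\<in>I1 xstar. G xstar $ i = 0) \<and>
         (\<forall>i\<in>I0 xstar. \<bar>G xstar $ i\<bar> \<le> L2 L * Ms s xstar)"
proof -
  define S where "S = {k. xstar $ k \<noteq> 0}"
  have cS: "card S = l0norm xstar" by (simp add: S_def l0norm_def)
  have part1: "G xstar $ i = 0" if "xstar $ i \<noteq> 0" for i
  proof (rule stat_coord[OF grad])
    fix t
    have "l0norm (xstar + t *\<^sub>R axis i 1) \<le> card S"
      by (rule supp_sub_card) (auto simp: S_def axis_def that)
    then show "f xstar \<le> f (xstar + t *\<^sub>R axis i 1)" using opt cS feas by simp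
  qed
  have Lnn: "0 \<le> L i j" if "i \<noteq> j" for i j
  proof -
    have "l0norm (1 *\<^sub>R (axis i 1 + axis j 0) :: real^'n) \<le> 2" by (rule l0_two)
    moreover have "axis j (0::real) = (0::real^'n)" by (simp add: axis_def vec_eq_iff)
    ultimately have "l0norm (axis i 1 :: real^'n) \<le> 2" by simp
    then have "pair_grad_dist G i j 0 (0 + axis i 1) \<le> L i j * norm (axis i 1 :: real^'n)"
      using Lc that unfolding pair_lip_consts_def by blast
    moreover have "0 \<le> pair_grad_dist G i j 0 (0 + axis i 1)" by (simp add: pair_grad_dist_def)
    ultimately show ?thesis by simp
  qed
  have LL2: "L i j \<le> L2 L" if "i \<noteq> j" for i j
  proof -
    have fin: "finite {L i j | i j. i \<noteq> j}"
      by (rule finite_subset[of _ "(\<lambda>(i,j). L i j) ` UNIV"]) auto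
    show ?thesis unfolding L2_def by (rule Max_ge[OF fin]) (use that in auto)
  qed
  have Ms: "0 \<le> Ms s xstar \<and> (l0norm xstar = s \<longrightarrow> (\<exists>j. xstar$j \<noteq> 0 \<and> \<bar>xstar$j\<bar> = Ms s xstar))"
    by (rule Ms_prop[OF s_pos s_lt])
  have part2: "\<bar>G xstar $ i\<bar> \<le> L2 L * Ms s xstar" if xi: "xstar $ i = 0" for i
  proof (cases "l0norm xstar < s")
    case True
    have "G xstar $ i = 0"
    proof (rule stat_coord[OF grad])
      fix t
      have "l0norm (xstar + t *\<^sub>R axis i 1) \<le> card (insert i S)"
        by (rule supp_sub_card) (auto simp: S_def axis_def)
      also have "\<dots> \<le> card S + 1" by (simp add: card_insert_le_m1 card_insert_if)
      finally show "f xstar \<le> f (xstar + t *\<^sub>R axis i 1)" using opt cS True by simp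
    qed
    moreover have "0 \<le> L2 L"
    proof -
      have "card (UNIV - {i}) > 0" using s_lt s_pos by simp
      then obtain j where "j \<noteq> i" by (metis Diff_iff card_gt_0_iff ex_in_conv singletonI)
      then show ?thesis using Lnn LL2 by (meson order_trans)
    qed
    ultimately show ?thesis using Ms by simp
  next
    case False
    then have eq: "l0norm xstar = s" using feas by simp
    with Ms obtain j where xj: "xstar $ j \<noteq> 0" "\<bar>xstar $ j\<bar> = Ms s xstar" by blast
    have ij: "i \<noteq> j" using xi xj by auto
    have jS: "j \<in> S" using xj by (simp add: S_def)
    have h: "0 \<le> t * G xstar $ i + L i j / 2 * (t^2 + (xstar $ j)^2)" for t
    proof -
      let ?d = "axis i t + axis j (- xstar $ j) :: real^'n"
      have "l0norm (xstar + ?d) \<le> card (insert i (S - {j}))"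
        by (rule supp_sub_card) (auto simp: S_def axis_def)
      also have "\<dots> \<le> card (S - {j}) + 1" by (simp add: card_insert_le_m1 card_insert_if)
      also have "\<dots> = s" using jS cS eq s_pos by (simp add: S_def)
      finally have "f xstar \<le> f (xstar + ?d)" by (rule opt)
      also have "\<dots> \<le> f xstar + G xstar \<bullet> ?d + L i j / 2 * (t^2 + (- xstar $ j)^2)"
        by (rule descent[OF grad Lc ij])
      also have "G xstar \<bullet> ?d = t * G xstar $ i"
        using part1[OF xj(1)] by (simp add: inner_add_right inner_axis)
      finally show ?thesis by simp
    qed
    have "\<bar>G xstar $ i\<bar> \<le> L i j * \<bar>xstar $ j\<bar>"
      by (rule quad_bound[OF h Lnn[OF ij]])
    also have "\<dots> \<le> L2 L * \<bar>xstar $ j\<bar>"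
      by (rule mult_right_mono[OF LL2[OF ij]]) simp
    finally show ?thesis using xj by simp
  qed
  show ?thesis using part1 part2 by (auto simp: I1_def I0_def)
qed

end
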